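(* There is a constant $C$ such that for all $u,v\in\mathbb{R}$, \[\int_0^\pi e^{-(u-v\cos s)^2}\frac{ds}{\pi}\le\frac{C}{\sqrt{(|u+v|+1)(|u-v|+1)}}.\] *)

theory Defs
  imports "HOL-Analysis.Analysis"
begin

end

theory Submission
  imports Defs
begin

definition ff :: "real \<Rightarrow> real \<Rightarrow> real \<Rightarrow> real" where
  "ff u v s = exp (- (u - v * cos s)\<^sup>2)"

lemma ff_cont: "continuous_on A (ff u v)"
  unfolding ff_def by (intro continuous_intros)

lemma ff_int: "ff u v integrable_on {a..b}"
  by (rule integrable_continuous_real[OF ff_cont])

lemma ff_nonneg: "0 \<le> ff u v s" unfolding ff_def by simp

lemma abs_le_sq: "\<bar>y::real\<bar> \<le> 1 + y\<^sup>2"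
proof -
  have "0 \<le> (\<bar>y\<bar> - 1)\<^sup>2" by simp
  then show ?thesis by (simp add: power2_eq_square algebra_simps abs_mult_self_eq)
qed

lemma exp_sq_bound: fixes y :: real shows "exp (- (y\<^sup>2)) * (1 + y\<^sup>2) \<le> 1"
proof -
  have "1 + y\<^sup>2 \<le> exp (y\<^sup>2)" using exp_ge_add_one_self by simp
  then show ?thesis by (simp add: exp_minus field_simps)
qed

lemma exp_lin_bound: fixes y :: real shows "exp (- (y\<^sup>2)) \<le> 2 / (1 + \<bar>y\<bar>)"
proof -
  have a: "exp (- (y\<^sup>2)) * (1 + y\<^sup>2) \<le> 1" by (rule exp_sq_bound)
  have b: "1 + \<bar>y\<bar> \<le> 2 * (1 + y\<^sup>2)"
    using abs_le_sq[of y] zero_le_power2[of y] by (smt (verit))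
  have "exp (- (y\<^sup>2)) * (1 + \<bar>y\<bar>) \<le> exp (- (y\<^sup>2)) * (2 * (1 + y\<^sup>2))"
    by (rule mult_left_mono[OF b]) simp
  also have "\<dots> = 2 * (exp (- (y\<^sup>2)) * (1 + y\<^sup>2))" by simp
  also have "\<dots> \<le> 2" using a by simp
  finally have "exp (- (y\<^sup>2)) * (1 + \<bar>y\<bar>) \<le> 2" .
  then show ?thesis by (simp add: field_simps)
qed

lemma exp_half_bound: fixes y :: real shows "exp (- (y\<^sup>2) / 2) \<le> 2 / (1 + \<bar>y\<bar>)"
proof -
  have a: "1 + y\<^sup>2/2 \<le> exp (y\<^sup>2/2)" using exp_ge_add_one_self by simp
  have b: "1 + \<bar>y\<bar> \<le> 2 * (1 + y\<^sup>2/2)"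
    using abs_le_sq[of y] by simp
  have "1 + \<bar>y\<bar> \<le> 2 * exp (y\<^sup>2/2)" using mult_left_mono[OF a, of 2] b by simp
  then show ?thesis by (simp add: exp_minus field_simps)
qed

lemma one_minus_cos: fixes s :: real shows "1 - cos s \<le> s\<^sup>2 / 2"
proof -
  have "cos s = cos (2 * (s/2))" by simp
  also have "\<dots> = 1 - 2 * (sin (s/2))\<^sup>2" by (rule cos_double_sin)
  finally have c: "1 - cos s = 2 * (sin (s/2))\<^sup>2" by simp
  have "\<bar>sin (s/2)\<bar> \<le> \<bar>s/2\<bar>" by (rule abs_sin_x_le_abs_x)
  then have "(sin (s/2))\<^sup>2 \<le> (s/2)\<^sup>2"
    by (metis abs_ge_zero power2_abs power_mono)
  then show ?thesis using c by (simp add: power_divide)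
qed

lemma sin_lower: fixes s :: real assumes "0 \<le> s" "s \<le> 1" shows "s / 2 \<le> sin s"
proof -
  let ?f = "\<lambda>x. sin x - x/2"
  have "\<And>x. 0 \<le> x \<Longrightarrow> x \<le> s \<Longrightarrow> 0 \<le> cos x - 1/2"
  proof -
    fix x :: real assume "0 \<le> x" "x \<le> s"
    have "1 - cos x \<le> x\<^sup>2/2" by (rule one_minus_cos)
    moreover have "x\<^sup>2 \<le> 1" using \<open>0 \<le> x\<close> \<open>x \<le> s\<close> assms
      by (intro power_le_one) auto
    ultimately show "0 \<le> cos x - 1/2" by linarith
  qed
  moreover have "\<And>x. (?f has_real_derivative cos x - 1/2) (at x)"
    by (auto intro!: derivative_eq_intros)
  ultimately have "?f 0 \<le> ?f s"
    by (intro DERIV_nonneg_imp_nondecreasing[OF assms(1)]) blast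
  then show ?thesis by simp
qed

lemma alg1:
  fixes e v a b x :: real assumes "0 < v" "0 < a"
  shows "e * (2 / (1 + x\<^sup>2)) * (b / a) = 2 * e / (v * a) * (v * b / (1 + x\<^sup>2))"
proof -
  have "0 < 1 + x\<^sup>2" by (simp add: add_pos_nonneg)
  then show ?thesis using assms by (simp add: field_simps)
qed

lemma triv_bound:
  assumes "a \<le> b" "0 \<le> m" "\<And>s. s \<in> {a..b} \<Longrightarrow> m \<le> \<bar>u - v * cos s\<bar>"
  shows "integral {a..b} (ff u v) \<le> (b - a) * exp (- (m\<^sup>2))"
proof -
  have "integral {a..b} (ff u v) \<le> integral {a..b} (\<lambda>s. exp (- (m\<^sup>2)))"
  proof (rule integral_le[OF ff_int])
    show "(\<lambda>s. exp (- (m\<^sup>2))) integrable_on {a..b}" by (intro integrable_continuous_real continuous_intros)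
    fix s assume "s \<in> {a..b}"
    then have "m \<le> \<bar>u - v * cos s\<bar>" by (rule assms(3))
    then have "m\<^sup>2 \<le> (u - v * cos s)\<^sup>2"
      using assms(2) by (metis abs_le_square_iff abs_of_nonneg)
    then show "ff u v s \<le> exp (- (m\<^sup>2))" unfolding ff_def by simp
  qed
  then show ?thesis using assms(1) by simp
qed

lemma arctan_bound:
  assumes v: "0 < v" and s1: "0 < s1" "s1 \<le> pi/2" and m: "0 \<le> m"
    and hm: "\<And>s. s \<in> {s1..pi/2} \<Longrightarrow> m \<le> \<bar>u - v * cos s\<bar>"
  shows "integral {s1..pi/2} (ff u v) \<le> 2 * pi * exp (- (m\<^sup>2) / 2) / (v * sin s1)"
proof -
  define c where "c = 2 * exp (- (m\<^sup>2) / 2) / (v * sin s1)"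
  have sp: "0 < sin s1" using s1 by (intro sin_gt_zero) auto
  have c0: "0 \<le> c" unfolding c_def using v sp by simp
  define F where "F s = arctan (u - v * cos s)" for s
  define g where "g s = v * sin s / (1 + (u - v * cos s)\<^sup>2)" for s
  have deriv: "(F has_real_derivative g s) (at s)" for s
    unfolding F_def g_def
    by (auto intro!: derivative_eq_intros simp: field_simps)
  have hi: "(g has_integral (F (pi/2) - F s1)) {s1..pi/2}"
    apply (rule fundamental_theorem_of_calculus)
    using s1 apply simp
    using deriv by (metis has_field_derivative_at_within has_real_derivative_iff_has_vector_derivative)
  have Fb: "F (pi/2) - F s1 \<le> pi"
    unfolding F_def using arctan_bounded[of "u - v * cos (pi/2)"] arctan_bounded[of "u - v * cos s1"]
    by linarith
  have "integral {s1..pi/2} (ff u v) \<le> integral {s1..pi/2} (\<lambda>s. c * g s)"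
  proof (rule integral_le[OF ff_int])
    show "(\<lambda>s. c * g s) integrable_on {s1..pi/2}"
      using integrable_on_cmult_left[of g _ c] hi by (auto simp: has_integral_integrable)
    fix s assume sI: "s \<in> {s1..pi/2}"
    define x where "x = u - v * cos s"
    have "m \<le> \<bar>x\<bar>" using hm[OF sI] unfolding x_def .
    then have mx: "m\<^sup>2 \<le> x\<^sup>2"
      using m by (metis abs_le_square_iff abs_of_nonneg)
    have sins: "sin s1 \<le> sin s" using sI s1 by (intro sin_monotone_2pi_le) auto
    have e1: "exp (- (x\<^sup>2) / 2) \<le> exp (- (m\<^sup>2) / 2)" using mx by simp
    have e2: "exp (- (x\<^sup>2) / 2) * (1 + x\<^sup>2) \<le> 2"
    proof -
      have "1 + x\<^sup>2 / 2 \<le> exp (x\<^sup>2 / 2)" using exp_ge_add_one_self by simp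
      then have "1 + x\<^sup>2 \<le> 2 * exp (x\<^sup>2 / 2)" by linarith
      then show ?thesis by (simp add: exp_minus field_simps)
    qed
    have split: "exp (- (x\<^sup>2)) = exp (- (x\<^sup>2) / 2) * exp (- (x\<^sup>2) / 2)"
      by (simp flip: exp_add)
    have "exp (- (x\<^sup>2)) \<le> exp (- (m\<^sup>2) / 2) * (2 / (1 + x\<^sup>2))"
    proof -
      have "exp (- (x\<^sup>2) / 2) \<le> 2 / (1 + x\<^sup>2)"
        using e2 by (simp add: field_simps add_pos_nonneg)
      then show ?thesis unfolding split
        using e1 by (intro mult_mono) auto
    qed
    also have "\<dots> \<le> exp (- (m\<^sup>2) / 2) * (2 / (1 + x\<^sup>2)) * (sin s / sin s1)"
    proof -
      have "1 \<le> sin s / sin s1" using sins sp by simp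
      moreover have "0 \<le> exp (- (m\<^sup>2) / 2) * (2 / (1 + x\<^sup>2))" by (simp add: add_pos_nonneg)
      ultimately show ?thesis using mult_left_mono[of 1 "sin s / sin s1" "exp (- (m\<^sup>2) / 2) * (2 / (1 + x\<^sup>2))"] by simp
    qed
    also have "\<dots> = c * g s"
      unfolding c_def g_def x_def[symmetric] by (rule alg1[OF v sp])
    finally show "ff u v s \<le> c * g s" unfolding ff_def x_def .
  qed
  also have "\<dots> = c * (F (pi/2) - F s1)"
    using hi by (simp add: integral_unique)
  also have "\<dots> \<le> c * pi" using Fb c0 by (intro mult_left_mono) auto
  also have "\<dots> = 2 * pi * exp (- (m\<^sup>2) / 2) / (v * sin s1)" unfolding c_def by simp
  finally show ?thesis .
qed

lemma split_bound:
  assumes v: "0 < v" and s1: "0 < s1" "s1 \<le> pi/2" and m: "0 \<le> m1" "0 \<le> m2"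
    and h1: "\<And>s. s \<in> {0..s1} \<Longrightarrow> m1 \<le> \<bar>u - v * cos s\<bar>"
    and h2: "\<And>s. s \<in> {s1..pi/2} \<Longrightarrow> m2 \<le> \<bar>u - v * cos s\<bar>"
  shows "integral {0..pi/2} (ff u v) \<le> s1 * exp (- (m1\<^sup>2)) + 2 * pi * exp (- (m2\<^sup>2) / 2) / (v * sin s1)"
proof -
  have "integral {0..pi/2} (ff u v) = integral {0..s1} (ff u v) + integral {s1..pi/2} (ff u v)"
    using s1 Henstock_Kurzweil_Integration.integral_combine[where a=0 and c=s1 and b="pi/2" and f="ff u v", OF _ _ ff_int] by simp
  moreover have "integral {0..s1} (ff u v) \<le> (s1 - 0) * exp (- (m1\<^sup>2))"
    using s1 m h1 by (intro triv_bound) auto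
  moreover have "integral {s1..pi/2} (ff u v) \<le> 2 * pi * exp (- (m2\<^sup>2) / 2) / (v * sin s1)"
    using v s1 m h2 by (intro arctan_bound) auto
  ultimately show ?thesis by simp
qed

lemma split_bound2:
  assumes v: "0 < v" and s1: "0 < s1" "s1 \<le> 1" and m: "0 \<le> m1" "0 \<le> m2"
    and h1: "\<And>s. s \<in> {0..s1} \<Longrightarrow> m1 \<le> \<bar>u - v * cos s\<bar>"
    and h2: "\<And>s. s \<in> {s1..pi/2} \<Longrightarrow> m2 \<le> \<bar>u - v * cos s\<bar>"
  shows "integral {0..pi/2} (ff u v) \<le> s1 * exp (- (m1\<^sup>2)) + 4 * pi * exp (- (m2\<^sup>2) / 2) / (v * s1)"
proof -
  have s1': "s1 \<le> pi/2" using s1 pi_gt3 by linarith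
  have sl: "s1 / 2 \<le> sin s1" using s1 by (intro sin_lower) auto
  have "2 * pi * exp (- (m2\<^sup>2) / 2) / (v * sin s1) \<le> 2 * pi * exp (- (m2\<^sup>2) / 2) / (v * (s1/2))"
    using sl v s1 by (intro divide_left_mono mult_left_mono mult_pos_pos) auto
  also have "\<dots> = 4 * pi * exp (- (m2\<^sup>2) / 2) / (v * s1)" by simp
  finally show ?thesis using split_bound[OF v s1(1) s1' m h1 h2] by linarith
qed

lemma fin:
  fixes X A Q P M :: real
  assumes "X \<le> A / sqrt Q" "0 < Q" "0 < P" "P \<le> M\<^sup>2 * Q" "0 \<le> A" "0 \<le> M" "A * M \<le> 100"
  shows "X \<le> 100 / sqrt P"
proof -
  have "sqrt P \<le> sqrt (M\<^sup>2 * Q)" using assms(4) by simp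
  also have "\<dots> = M * sqrt Q" using assms(6) by (simp add: real_sqrt_mult)
  finally have sP: "sqrt P \<le> M * sqrt Q" .
  have q: "0 < sqrt Q" "0 < sqrt P" using assms(2,3) by auto
  have "X * sqrt P \<le> A / sqrt Q * sqrt P"
    using mult_right_mono[OF assms(1), of "sqrt P"] q by simp
  also have "\<dots> \<le> A / sqrt Q * (M * sqrt Q)"
    using sP assms(5) q by (intro mult_left_mono) auto
  also have "\<dots> = A * M" using q by simp
  finally have "X * sqrt P \<le> 100" using assms(7) by linarith
  then show ?thesis using q by (simp add: pos_le_divide_eq)
qed

abbreviation PP :: "real \<Rightarrow> real \<Rightarrow> real" where
  "PP u v \<equiv> (\<bar>u + v\<bar> + 1) * (\<bar>u - v\<bar> + 1)"

lemma PP_pos: "0 < PP u v" by (simp add: add_pos_nonneg)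

lemma caseA:
  assumes "0 \<le> v" "v < 1"
  shows "integral {0..pi/2} (ff u v) \<le> 100 / sqrt (PP u v)"
proof -
  define m where "m = max 0 (\<bar>u\<bar> - 1)"
  have m0: "0 \<le> m" unfolding m_def by simp
  have hm: "m \<le> \<bar>u - v * cos s\<bar>" for s
  proof -
    have "\<bar>v * cos s\<bar> \<le> 1"
      using assms abs_cos_le_one[of s] by (simp add: abs_mult mult_le_one)
    then show ?thesis unfolding m_def by linarith
  qed
  have "integral {0..pi/2} (ff u v) \<le> (pi/2 - 0) * exp (- (m\<^sup>2))"
    using hm m0 by (intro triv_bound) auto
  also have "\<dots> \<le> (pi/2) * (2 / (1 + \<bar>m\<bar>))"
    using mult_left_mono[OF exp_lin_bound[of m], of "pi/2"] by simp
  also have "\<dots> = pi / sqrt ((1 + m)\<^sup>2)" using m0 by simp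
  finally have X: "integral {0..pi/2} (ff u v) \<le> pi / sqrt ((1 + m)\<^sup>2)" .
  have a: "\<bar>u + v\<bar> + 1 \<le> 3 * (1 + m)" "\<bar>u - v\<bar> + 1 \<le> 3 * (1 + m)"
  proof -
    have f1: "\<bar>u\<bar> - 1 \<le> m" unfolding m_def by simp
    have f2: "\<bar>u + v\<bar> \<le> \<bar>u\<bar> + v" "\<bar>u - v\<bar> \<le> \<bar>u\<bar> + v"
      using abs_triangle_ineq[of u v] abs_triangle_ineq4[of u v] assms by auto
    show "\<bar>u + v\<bar> + 1 \<le> 3 * (1 + m)" using f1 f2 m0 assms by (smt (verit))
    show "\<bar>u - v\<bar> + 1 \<le> 3 * (1 + m)" using f1 f2 m0 assms by (smt (verit))
  qed
  have "PP u v \<le> (3 * (1 + m)) * (3 * (1 + m))"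
    using a by (intro mult_mono) auto
  also have "\<dots> = 3\<^sup>2 * (1 + m)\<^sup>2" by (simp add: power2_eq_square algebra_simps)
  finally have P: "PP u v \<le> 3\<^sup>2 * (1 + m)\<^sup>2" .
  show ?thesis
    by (rule fin[OF X _ PP_pos P]) (use m0 pi_less_4 in auto)
qed

lemma caseB:
  assumes v: "1 \<le> v" and b: "\<bar>u - v\<bar> \<le> 1"
  shows "integral {0..pi/2} (ff u v) \<le> 100 / sqrt (PP u v)"
proof -
  have v0: "0 < v" using v by simp
  have sv: "1 \<le> sqrt v" using v by simp
  define s1 where "s1 = 1 / sqrt v"
  have s1: "0 < s1" "s1 \<le> 1" unfolding s1_def using sv by auto
  have vs1: "v * s1 = sqrt v" unfolding s1_def using v0 by (simp add: real_div_sqrt)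
  have "integral {0..pi/2} (ff u v) \<le> s1 * exp (- (0\<^sup>2)) + 4 * pi * exp (- (0\<^sup>2) / 2) / (v * s1)"
    by (rule split_bound2[OF v0 s1]) auto
  also have "\<dots> = (1 + 4 * pi) / sqrt v" unfolding vs1 by (simp add: s1_def add_divide_distrib)
  finally have X: "integral {0..pi/2} (ff u v) \<le> (1 + 4 * pi) / sqrt v" .
  have a: "\<bar>u + v\<bar> + 1 \<le> 2 * v + 2" using b v by (smt (verit))
  have "PP u v \<le> (2 * v + 2) * 2"
    using a b by (intro mult_mono) auto
  also have "\<dots> \<le> 3\<^sup>2 * v" using v by simp
  finally have P: "PP u v \<le> 3\<^sup>2 * v" .
  show ?thesis
    by (rule fin[OF X _ PP_pos P]) (use v pi_less_4 in auto)
qed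

lemma caseC:
  assumes v: "1 \<le> v" and b: "1 < u - v"
  shows "integral {0..pi/2} (ff u v) \<le> 100 / sqrt (PP u v)"
proof -
  define b where "b = u - v"
  have b1: "1 < b" using b unfolding b_def by simp
  have v0: "0 < v" using v by simp
  have hm: "b \<le> \<bar>u - v * cos s\<bar>" for s
  proof -
    have "v * cos s \<le> v * 1" using v0 by (intro mult_left_mono) auto
    then show ?thesis unfolding b_def by linarith
  qed
  have uv: "\<bar>u + v\<bar> = b + 2 * v" "\<bar>u - v\<bar> = b" unfolding b_def using b1 v0 b_def by auto
  show ?thesis
  proof (cases "v \<le> b + 1")
    case True
    have "integral {0..pi/2} (ff u v) \<le> (pi/2 - 0) * exp (- (b\<^sup>2))"
      using hm b1 by (intro triv_bound) auto
    also have "\<dots> \<le> (pi/2) * (2 / (1 + \<bar>b\<bar>))"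
      using mult_left_mono[OF exp_lin_bound[of b], of "pi/2"] by simp
    also have "\<dots> = pi / sqrt ((1 + b)\<^sup>2)" using b1 by simp
    finally have X: "integral {0..pi/2} (ff u v) \<le> pi / sqrt ((1 + b)\<^sup>2)" .
    have "PP u v \<le> (3 * (1 + b)) * (1 + b)"
      unfolding uv using True b1 by (intro mult_mono) auto
    also have "\<dots> \<le> 2\<^sup>2 * (1 + b)\<^sup>2" using b1 by (simp add: power2_eq_square)
    finally have P: "PP u v \<le> 2\<^sup>2 * (1 + b)\<^sup>2" .
    show ?thesis
      by (rule fin[OF X _ PP_pos P]) (use b1 pi_less_4 in auto)
  next
    case False
    have sv: "1 \<le> sqrt v" using v by simp
    define s1 where "s1 = 1 / sqrt v"
    have s1: "0 < s1" "s1 \<le> 1" unfolding s1_def using sv by auto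
    have vs1: "v * s1 = sqrt v" unfolding s1_def using v0 by (simp add: real_div_sqrt)
    have "integral {0..pi/2} (ff u v) \<le> s1 * exp (- (b\<^sup>2)) + 4 * pi * exp (- (b\<^sup>2) / 2) / (v * s1)"
      by (rule split_bound2[OF v0 s1]) (use b1 hm in auto)
    also have "\<dots> \<le> s1 * exp (- (b\<^sup>2) / 2) + 4 * pi * exp (- (b\<^sup>2) / 2) / (v * s1)"
      using s1 by (intro add_right_mono mult_left_mono) auto
    also have "\<dots> = (1 + 4 * pi) * exp (- (b\<^sup>2) / 2) / sqrt v"
      unfolding vs1 by (simp add: s1_def add_divide_distrib ring_distribs)
    also have "\<dots> \<le> (1 + 4 * pi) * (2 / (1 + \<bar>b\<bar>)) / sqrt v"
      using exp_half_bound[of b] sv pi_gt3 by (intro divide_right_mono mult_left_mono) auto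
    also have "\<dots> = (2 * (1 + 4 * pi)) / sqrt (v * (1 + b)\<^sup>2)"
      using b1 by (simp add: real_sqrt_mult field_simps)
    finally have X: "integral {0..pi/2} (ff u v) \<le> (2 * (1 + 4 * pi)) / sqrt (v * (1 + b)\<^sup>2)" .
    have "PP u v \<le> (3 * v) * (1 + b)"
      unfolding uv using False b1 by (intro mult_mono) auto
    also have "\<dots> \<le> (4 * v) * ((1 + b) * (1 + b))"
      using b1 v0 by (intro mult_mono) auto
    also have "\<dots> = 2\<^sup>2 * (v * (1 + b)\<^sup>2)" by (simp add: power2_eq_square)
    finally have P: "PP u v \<le> 2\<^sup>2 * (v * (1 + b)\<^sup>2)" .
    show ?thesis
      by (rule fin[OF X _ PP_pos P]) (use b1 v0 pi_less_4 in auto)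
  qed
qed

lemma b_exp: fixes b :: real shows "b * exp (- ((b/2)\<^sup>2)) \<le> 1"
proof -
  have "1 + (b/2)\<^sup>2 \<le> exp ((b/2)\<^sup>2)" using exp_ge_add_one_self by simp
  moreover have "b \<le> 1 + (b/2)\<^sup>2"
  proof -
    have "0 \<le> (b/2 - 1)\<^sup>2" by simp
    then show ?thesis by (simp add: power2_eq_square algebra_simps)
  qed
  ultimately have "b \<le> exp ((b/2)\<^sup>2)" by linarith
  then show ?thesis by (simp add: exp_minus field_simps)
qed

lemma caseD:
  assumes v: "1 \<le> v" and u: "0 < u" "u < v - 1"
  shows "integral {0..pi/2} (ff u v) \<le> 100 / sqrt (PP u v)"
proof -
  define b where "b = v - u"
  have b1: "1 < b" "b < v" using u unfolding b_def by auto
  have v0: "0 < v" using v by simp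
  define R where "R = sqrt b * sqrt v"
  have R0: "0 < R" unfolding R_def using b1 v0 by simp
  define s1 where "s1 = sqrt b / sqrt v"
  have s1: "0 < s1" "s1 \<le> 1" unfolding s1_def using b1 v0 by (auto simp: divide_le_eq_1)
  have s1sq: "s1\<^sup>2 = b / v" unfolding s1_def using b1 v0 by (simp add: power_divide)
  have vs1: "v * s1 = R" unfolding s1_def R_def using v0
    by (metis real_div_sqrt times_divide_eq_left times_divide_eq_right mult.commute less_imp_le)
  have s1R: "s1 = b / R" unfolding s1_def R_def using b1 v0
    by (simp add: field_simps)
  have h1: "b / 2 \<le> \<bar>u - v * cos s\<bar>" if "s \<in> {0..s1}" for s
  proof -
    have "1 - cos s \<le> s\<^sup>2 / 2" by (rule one_minus_cos)
    also have "\<dots> \<le> s1\<^sup>2 / 2" using that by (auto intro!: power_mono)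
    finally have c: "1 - cos s \<le> b / v / 2" unfolding s1sq .
    have "v * (1 - cos s) \<le> v * (b / v / 2)" using mult_left_mono[OF c, of v] v0 by simp
    also have "\<dots> = b / 2" using v0 by simp
    finally have "v * (1 - cos s) \<le> b / 2" .
    then have "v - v * cos s \<le> (v - u) / 2" unfolding b_def by (simp add: algebra_simps)
    then have "u - v * cos s \<le> - (b / 2)" unfolding b_def by (simp add: field_simps)
    then show ?thesis by linarith
  qed
  have "integral {0..pi/2} (ff u v) \<le> s1 * exp (- ((b/2)\<^sup>2)) + 4 * pi * exp (- (0\<^sup>2) / 2) / (v * s1)"
    by (rule split_bound2[OF v0 s1 _ _ h1]) (use b1 in auto)
  also have "\<dots> = b * exp (- ((b/2)\<^sup>2)) / R + 4 * pi / R" unfolding vs1 by (simp add: s1R)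
  also have "\<dots> \<le> 1 / R + 4 * pi / R"
    using b_exp[of b] R0 by (intro add_right_mono divide_right_mono) auto
  also have "\<dots> = (1 + 4 * pi) / sqrt (b * v)" unfolding R_def by (simp add: real_sqrt_mult add_divide_distrib)
  finally have X: "integral {0..pi/2} (ff u v) \<le> (1 + 4 * pi) / sqrt (b * v)" .
  have uv: "\<bar>u + v\<bar> = u + v" "\<bar>u - v\<bar> = b" unfolding b_def using u v0 by auto
  have "PP u v \<le> (2 * v) * (2 * b)"
    unfolding uv using u b1 by (intro mult_mono) auto
  also have "\<dots> = 2\<^sup>2 * (b * v)" by simp
  finally have P: "PP u v \<le> 2\<^sup>2 * (b * v)" .
  show ?thesis
    by (rule fin[OF X _ PP_pos P]) (use b1 v0 pi_less_4 in auto)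
qed

lemma caseE:
  assumes v: "1 \<le> v" and u: "u \<le> 0"
  shows "integral {0..pi/2} (ff u v) \<le> 100 / sqrt (PP u v)"
proof -
  have v0: "0 < v" using v by simp
  define T where "T = 1 - u + v"
  have T0: "0 < T" unfolding T_def using u v by simp
  define m1 where "m1 = v/2 - u"
  have m10: "0 \<le> m1" unfolding m1_def using u v by simp
  have h1: "m1 \<le> \<bar>u - v * cos s\<bar>" if "s \<in> {0..pi/3}" for s
  proof -
    have "cos (pi/3) \<le> cos s" using that by (intro cos_monotone_0_pi_le) auto
    then have "1/2 \<le> cos s" by (simp add: cos_60)
    then have "v * (1/2) \<le> v * cos s" using v0 by (intro mult_left_mono) auto
    then have "u - v * cos s \<le> - m1" unfolding m1_def by (simp add: field_simps)
    then show ?thesis using m10 by linarith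
  qed
  have h2: "- u \<le> \<bar>u - v * cos s\<bar>" if "s \<in> {pi/3..pi/2}" for s
  proof -
    have "0 \<le> cos s" using that by (intro cos_ge_zero) auto
    then have "0 \<le> v * cos s" using v0 by simp
    then show ?thesis using u by linarith
  qed
  have s1: "0 < pi/3" "pi/3 \<le> pi/2" by auto
  have "integral {0..pi/2} (ff u v) \<le> pi/3 * exp (- (m1\<^sup>2)) + 2 * pi * exp (- ((-u)\<^sup>2) / 2) / (v * sin (pi/3))"
    by (rule split_bound[OF v0 s1 m10 _ h1 h2]) (use u in auto)
  also have "\<dots> \<le> pi/3 * (4 / T) + 16 * pi / T"
  proof (rule add_mono)
    have "exp (- (m1\<^sup>2)) \<le> 2 / (1 + \<bar>m1\<bar>)" by (rule exp_lin_bound)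
    also have "\<dots> = 2 / (1 + m1)" using m10 by simp
    also have "\<dots> \<le> 2 / (T/2)"
    proof (rule divide_left_mono)
      show "T / 2 \<le> 1 + m1" unfolding T_def m1_def using u by (simp add: field_simps)
      show "0 \<le> (2::real)" by simp
      show "0 < (1 + m1) * (T / 2)" using T0 m10 by simp
    qed
    also have "\<dots> = 4 / T" by simp
    finally show "pi/3 * exp (- (m1\<^sup>2)) \<le> pi/3 * (4 / T)" by (intro mult_left_mono) auto
  next
    define e where "e = exp (- ((-u)\<^sup>2) / 2)"
    have e0: "0 \<le> e" unfolding e_def by simp
    have sn: "1/2 \<le> sin (pi/3)" unfolding sin_60 by simp
    have "2 * pi * e / (v * sin (pi/3)) \<le> 2 * pi * e / (v * (1/2))"
      using sn v0 e0 by (intro divide_left_mono mult_left_mono mult_pos_pos) auto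
    also have "\<dots> = 4 * pi * e / v" by simp
    also have "\<dots> \<le> 4 * pi * (2 / (1 - u)) / v"
    proof -
      have "e \<le> 2 / (1 + \<bar>-u\<bar>)" unfolding e_def by (rule exp_half_bound)
      then have "e \<le> 2 / (1 - u)" using u by simp
      then show ?thesis using v0 by (intro divide_right_mono mult_left_mono) auto
    qed
    also have "\<dots> = 8 * pi / ((1 - u) * v)" by simp
    also have "\<dots> \<le> 8 * pi / (T / 2)"
    proof (rule divide_left_mono)
      have "(1 - u) * v - T / 2 = (v - 1) / 2 - u * (v - 1/2)" unfolding T_def by (simp add: field_simps)
      moreover have "0 \<le> - u * (v - 1/2)" using u v by (intro mult_nonneg_nonneg) auto
      ultimately show "T / 2 \<le> (1 - u) * v" using v by (simp add: field_simps)
      show "0 \<le> 8 * pi" by simp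
      show "0 < (1 - u) * v * (T / 2)" using u v0 T0 by simp
    qed
    also have "\<dots> = 16 * pi / T" by simp
    finally show "2 * pi * exp (- ((-u)\<^sup>2) / 2) / (v * sin (pi/3)) \<le> 16 * pi / T" unfolding e_def .
  qed
  also have "\<dots> = (4 * pi / 3 + 16 * pi) / sqrt (T\<^sup>2)" using T0 by (simp add: field_simps)
  finally have X: "integral {0..pi/2} (ff u v) \<le> (4 * pi / 3 + 16 * pi) / sqrt (T\<^sup>2)" .
  have a: "\<bar>u + v\<bar> + 1 \<le> T" "\<bar>u - v\<bar> + 1 \<le> T" unfolding T_def using u v by auto
  have "PP u v \<le> T * T" using a by (intro mult_mono) auto
  also have "\<dots> = 1\<^sup>2 * T\<^sup>2" by (simp add: power2_eq_square)
  finally have P: "PP u v \<le> 1\<^sup>2 * T\<^sup>2" .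
  show ?thesis
    by (rule fin[OF X _ PP_pos P]) (use T0 pi_less_4 in auto)
qed

lemma half:
  assumes "0 \<le> v"
  shows "integral {0..pi/2} (ff u v) \<le> 100 / sqrt (PP u v)"
proof (cases "v < 1")
  case True then show ?thesis using caseA assms by blast
next
  case False
  then have v: "1 \<le> v" by simp
  show ?thesis
  proof (cases "u \<le> 0")
    case True then show ?thesis using caseE v by blast
  next
    case u: False
    show ?thesis
    proof (cases "\<bar>u - v\<bar> \<le> 1")
      case True then show ?thesis using caseB v by blast
    next
      case False
      then have "1 < u - v \<or> u < v - 1" by linarith
      then show ?thesis
      proof
        assume "1 < u - v" then show ?thesis using caseC v by blast
      next
        assume "u < v - 1" then show ?thesis using caseD[of v u] v u by linarith
      qed
    qed
  qed
qed

lemma reflect_half: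
  "integral {pi/2..pi} (ff u v) = integral {0..pi/2} (ff (-u) v)"
proof -
  let ?F = "ff u v"
  have "integral {-pi..-(pi/2)} (\<lambda>x. ?F (-x)) = integral {pi/2..pi} ?F"
    using Henstock_Kurzweil_Integration.integral_reflect_real[of "pi/2" pi ?F] by simp
  moreover have "integral {-pi - (-pi)..-(pi/2) - (-pi)} (\<lambda>x. (\<lambda>x. ?F (-x)) (x + (-pi)))
      = integral {-pi..-(pi/2)} (\<lambda>x. ?F (-x))"
    by (rule integral_shift_real_ivl)
  moreover have "(\<lambda>x. (\<lambda>x. ?F (-x)) (x + (-pi))) = ff (-u) v"
    by (rule ext) (simp add: ff_def power2_eq_square algebra_simps)
  moreover have "-pi - (-pi) = (0::real)" "-(pi/2) - (-pi) = pi/2" by simp_all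
  ultimately show ?thesis by simp
qed

lemma full_pos:
  assumes "0 \<le> v"
  shows "integral {0..pi} (ff u v) \<le> 200 / sqrt (PP u v)"
proof -
  have "integral {0..pi} (ff u v) = integral {0..pi/2} (ff u v) + integral {pi/2..pi} (ff u v)"
    using Henstock_Kurzweil_Integration.integral_combine[where a=0 and c="pi/2" and b=pi and f="ff u v", OF _ _ ff_int]
    by simp
  also have "\<dots> = integral {0..pi/2} (ff u v) + integral {0..pi/2} (ff (-u) v)"
    by (simp add: reflect_half)
  also have "\<dots> \<le> 100 / sqrt (PP u v) + 100 / sqrt (PP (-u) v)"
    by (rule add_mono[OF half[OF assms, of u] half[OF assms, of "-u"]])
  also have "PP (-u) v = PP u v"
  proof -
    have "\<bar>-u + v\<bar> = \<bar>u - v\<bar>" "\<bar>-u - v\<bar> = \<bar>u + v\<bar>" by linarith+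
    then show ?thesis by (simp only: mult.commute)
  qed
  finally show ?thesis by simp
qed

lemma full:
  "integral {0..pi} (ff u v) \<le> 200 / sqrt (PP u v)"
proof (cases "0 \<le> v")
  case True then show ?thesis by (rule full_pos)
next
  case False
  have "ff u v = ff (-u) (-v)" by (rule ext) (simp add: ff_def power2_eq_square algebra_simps)
  moreover have "PP (-u) (-v) = PP u v"
  proof -
    have "\<bar>-u + -v\<bar> = \<bar>u + v\<bar>" "\<bar>-u - -v\<bar> = \<bar>u - v\<bar>" by linarith+
    then show ?thesis by (simp only:)
  qed
  ultimately show ?thesis using full_pos[of "-v" "-u"] False by simp
qed

theorem lemmaA4:
  shows "\<exists>C::real. \<forall>u v :: real.
    integral {0..pi} (\<lambda>s. exp (- (u - v * cos s)\<^sup>2) / pi)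
      \<le> C / sqrt ((\<bar>u + v\<bar> + 1) * (\<bar>u - v\<bar> + 1))"
proof (intro exI allI)
  fix u v :: real
  have hi: "(ff u v has_integral integral {0..pi} (ff u v)) {0..pi}"
    using ff_int by (simp add: integrable_integral)
  have "integral {0..pi} (\<lambda>s. exp (- (u - v * cos s)\<^sup>2) / pi) = integral {0..pi} (ff u v) / pi"
    using has_integral_divide[OF hi, of pi] unfolding ff_def by (simp add: integral_unique)
  also have "\<dots> \<le> integral {0..pi} (ff u v)"
  proof -
    have "0 \<le> integral {0..pi} (ff u v)" using ff_int ff_nonneg by (intro integral_nonneg) auto
    then have "integral {0..pi} (ff u v) / pi \<le> integral {0..pi} (ff u v) / 1"
      using pi_gt3 by (intro divide_left_mono) auto
    then show ?thesis by simp
  qed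
  also have "\<dots> \<le> 200 / sqrt (PP u v)" by (rule full)
  finally show "integral {0..pi} (\<lambda>s. exp (- (u - v * cos s)\<^sup>2) / pi)
      \<le> 200 / sqrt ((\<bar>u + v\<bar> + 1) * (\<bar>u - v\<bar> + 1))" .
qed

end
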